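(* Let $p$ be one of $(123,\{0\},\{0\})$, $(123,\{0\},\{0,2\})$, $(132,\{0\},\{0\})$, $(132,\{0\},\{0,2\})$, or any pattern in the same symmetry class as one of these. Then for all $n\ge1$, $a_n(p)=n!-(n-1)!+1$.
   Context: For $n\ge1$, $\mathcal S_n$ is the set of permutations $\pi=\pi_1\cdots\pi_n$ of $[n]$. A bi-vincular pattern of length $k$ is a triple $p=(\sigma,X,Y)$ with $\sigma\in\mathcal S_k$ and $X,Y\subseteq\{0,1,\dots,k\}$. A permutation $\pi\in\mathcal S_n$ contains $p$ if there are indices $1\le i_1<\dots<i_k\le n$ such that $(\pi_{i_1},\dots,\pi_{i_k})$ is order-isomorphic to $\sigma$ and, letting $j_1<\dots<j_k$ be the values $\pi_{i_1},\dots,\pi_{i_k}$ sorted increasingly and setting $i_0=j_0=0$, $i_{k+1}=j_{k+1}=n+1$, one has $i_{x+1}=i_x+1$ for all $x\in X$ and $j_{y+1}=j_y+1$ for all $y\in Y$. Otherwise $\pi$ avoids $p$; $a_n(p)$ is the number of $\pi\in\mathcal S_n$ avoiding $p$. Symmetries: $p^{i}=(\sigma^{-1},Y,X)$, $p^{r}=(\sigma^{r},\{k-x:x\in X\},Y)$, $p^{c}=(\sigma^{c},X,\{k-y:y\in Y\})$ with $\sigma^r_j=\sigma_{k+1-j}$, $\sigma^c_j=k+1-\sigma_j$; the symmetry class of $p$ consists of all patterns obtained from $p$ by finitely many applications of these maps. *)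

theory Defs
  imports "HOL-Combinatorics.Multiset_Permutations"
begin

text \<open>Permutations of [n] are lists pi with set pi = {1..n}, distinct; pi_i = pi ! (i - 1).\<close>

type_synonym bvpat = "nat list \<times> nat set \<times> nat set"

definition valid_bvpat :: "bvpat \<Rightarrow> bool" where
  "valid_bvpat p = (case p of (\<sigma>, X, Y) \<Rightarrow>
     \<sigma> \<in> permutations_of_set {1..length \<sigma>} \<and> X \<subseteq> {0..length \<sigma>} \<and> Y \<subseteq> {0..length \<sigma>})"

definition ext_seq :: "nat \<Rightarrow> nat \<Rightarrow> (nat \<Rightarrow> nat) \<Rightarrow> nat \<Rightarrow> nat" where
  "ext_seq n k f x = (if x = 0 then 0 else if x = k + 1 then n + 1 else f x)"

definition contains_bv :: "nat list \<Rightarrow> bvpat \<Rightarrow> bool" where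
  "contains_bv \<pi> p = (case p of (\<sigma>, X, Y) \<Rightarrow>
     (let n = length \<pi>; k = length \<sigma> in
      \<exists>i :: nat \<Rightarrow> nat.
        (\<forall>a\<in>{1..k}. 1 \<le> i a \<and> i a \<le> n) \<and>
        (\<forall>a\<in>{1..k}. \<forall>b\<in>{1..k}. a < b \<longrightarrow> i a < i b) \<and>
        (\<forall>a\<in>{1..k}. \<forall>b\<in>{1..k}. (\<pi> ! (i a - 1) < \<pi> ! (i b - 1)) \<longleftrightarrow> (\<sigma> ! (a - 1) < \<sigma> ! (b - 1))) \<and>
        (let j = (\<lambda>m. sorted_list_of_set ((\<lambda>a. \<pi> ! (i a - 1)) ` {1..k}) ! (m - 1)) in
          (\<forall>x\<in>X. ext_seq n k i (x + 1) = ext_seq n k i x + 1) \<and>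
          (\<forall>y\<in>Y. ext_seq n k j (y + 1) = ext_seq n k j y + 1))))"

definition avoid_count :: "nat \<Rightarrow> bvpat \<Rightarrow> nat" where
  "avoid_count n p = card {\<pi> \<in> permutations_of_set {1..n}. \<not> contains_bv \<pi> p}"

definition perm_inv_list :: "nat list \<Rightarrow> nat list" where
  "perm_inv_list \<sigma> = map (\<lambda>v. (THE a. a < length \<sigma> \<and> \<sigma> ! a = v) + 1) [1..<length \<sigma> + 1]"

definition bv_inv :: "bvpat \<Rightarrow> bvpat" where
  "bv_inv p = (case p of (\<sigma>, X, Y) \<Rightarrow> (perm_inv_list \<sigma>, Y, X))"

definition bv_rev :: "bvpat \<Rightarrow> bvpat" where
  "bv_rev p = (case p of (\<sigma>, X, Y) \<Rightarrow> (rev \<sigma>, (\<lambda>x. length \<sigma> - x) ` X, Y))"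

definition bv_comp :: "bvpat \<Rightarrow> bvpat" where
  "bv_comp p = (case p of (\<sigma>, X, Y) \<Rightarrow>
     (map (\<lambda>v. length \<sigma> + 1 - v) \<sigma>, X, (\<lambda>y. length \<sigma> - y) ` Y))"

inductive_set sym_class :: "bvpat \<Rightarrow> bvpat set" for p :: bvpat where
  base: "p \<in> sym_class p"
| inv: "q \<in> sym_class p \<Longrightarrow> bv_inv q \<in> sym_class p"
| rev: "q \<in> sym_class p \<Longrightarrow> bv_rev q \<in> sym_class p"
| comp: "q \<in> sym_class p \<Longrightarrow> bv_comp q \<in> sym_class p"

end

theory Submission
  imports Defs
begin


definition sinv :: "nat list \<Rightarrow> nat \<Rightarrow> nat" where
  "sinv \<sigma> m = (THE a. a < length \<sigma> \<and> \<sigma> ! a = m) + 1"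

abbreviation isperm :: "nat list \<Rightarrow> bool" where
  "isperm \<sigma> \<equiv> \<sigma> \<in> permutations_of_set {1..length \<sigma>}"

lemma isperm_iff: "isperm \<sigma> \<longleftrightarrow> set \<sigma> = {1..length \<sigma>} \<and> distinct \<sigma>"
  by (simp add: permutations_of_set_def)

lemma sinv_nth: assumes "isperm \<sigma>" "a < length \<sigma>" shows "sinv \<sigma> (\<sigma> ! a) = a + 1"
proof -
  have d: "distinct \<sigma>" using assms isperm_iff by blast
  have "(THE b. b < length \<sigma> \<and> \<sigma> ! b = \<sigma> ! a) = a"
    by (rule the_equality) (use assms d nth_eq_iff_index_eq in auto)
  thus ?thesis by (simp add: sinv_def)
qed

lemma sinv_props: assumes "isperm \<sigma>" "m \<in> {1..length \<sigma>}"
  shows "sinv \<sigma> m \<in> {1..length \<sigma>}" "\<sigma> ! (sinv \<sigma> m - 1) = m"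
proof -
  have "m \<in> set \<sigma>" using assms isperm_iff by blast
  then obtain a where a: "a < length \<sigma>" "\<sigma> ! a = m" by (auto simp: in_set_conv_nth)
  have "sinv \<sigma> m = a + 1" using sinv_nth[OF assms(1) a(1)] a(2) by simp
  thus "sinv \<sigma> m \<in> {1..length \<sigma>}" "\<sigma> ! (sinv \<sigma> m - 1) = m" using a by auto
qed

lemma isperm_nth: assumes "isperm \<sigma>" "a < length \<sigma>" shows "\<sigma> ! a \<in> {1..length \<sigma>}"
  using assms isperm_iff nth_mem by blast

lemma perm_inv_list_eq: "perm_inv_list \<sigma> = map (sinv \<sigma>) [1..<length \<sigma> + 1]"
  unfolding perm_inv_list_def sinv_def by (rule refl)

lemma perm_inv_length[simp]: "length (perm_inv_list \<sigma>) = length \<sigma>"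
  by (simp add: perm_inv_list_eq del: upt_Suc)

lemma perm_inv_nth: "m < length \<sigma> \<Longrightarrow> perm_inv_list \<sigma> ! m = sinv \<sigma> (m+1)"
  by (simp add: perm_inv_list_eq nth_map_upt del: upt_Suc)

lemma perm_inv_isperm: assumes "isperm \<sigma>" shows "isperm (perm_inv_list \<sigma>)"
proof -
  let ?k = "length \<sigma>"
  have inj: "inj_on (sinv \<sigma>) {1..?k}"
  proof (rule inj_onI)
    fix x y assume "x \<in> {1..?k}" "y \<in> {1..?k}" "sinv \<sigma> x = sinv \<sigma> y"
    thus "x = y" using sinv_props[OF assms(1)] by metis
  qed
  have sub: "sinv \<sigma> ` {1..?k} \<subseteq> {1..?k}" using sinv_props[OF assms(1)] by auto
  have "sinv \<sigma> ` {1..?k} = {1..?k}"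
    using inj sub by (simp add: card_image card_subset_eq)
  moreover have "set [1..<?k+1] = {1..?k}" by auto
  moreover have "distinct (map (sinv \<sigma>) [1..<?k+1])"
    using inj by (simp add: distinct_map atLeastLessThanSuc_atLeastAtMost del: upt_Suc)
  ultimately show ?thesis unfolding isperm_iff perm_inv_list_eq
    by (simp add: atLeastLessThanSuc_atLeastAtMost del: upt_Suc)
qed

lemma perm_inv_inv: assumes "isperm \<sigma>" shows "perm_inv_list (perm_inv_list \<sigma>) = \<sigma>"
proof (rule nth_equalityI)
  show "length (perm_inv_list (perm_inv_list \<sigma>)) = length \<sigma>" by simp
  fix a assume a: "a < length (perm_inv_list (perm_inv_list \<sigma>))"
  hence a': "a < length \<sigma>" by simp
  define v where "v = \<sigma> ! a"
  have v: "v - 1 < length \<sigma>" "v - 1 + 1 = v" using isperm_nth[OF assms a'] unfolding v_def by auto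
  have "sinv \<sigma> v = a + 1" using sinv_nth[OF assms a'] v_def by simp
  hence "perm_inv_list \<sigma> ! (v - 1) = a + 1"
    using perm_inv_nth[of "v - 1" \<sigma>] v by simp
  hence "sinv (perm_inv_list \<sigma>) (a+1) = v"
    using sinv_nth[OF perm_inv_isperm[OF assms(1)], of "v - 1"] v by simp
  thus "perm_inv_list (perm_inv_list \<sigma>) ! a = \<sigma> ! a"
    using perm_inv_nth[of a "perm_inv_list \<sigma>"] a' v_def by simp
qed


lemma sinv_image: assumes "isperm \<sigma>" shows "sinv \<sigma> ` {1..length \<sigma>} = {1..length \<sigma>}"
proof -
  let ?k = "length \<sigma>"
  have inj: "inj_on (sinv \<sigma>) {1..?k}"
  proof (rule inj_onI)
    fix x y assume "x \<in> {1..?k}" "y \<in> {1..?k}" "sinv \<sigma> x = sinv \<sigma> y"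
    thus "x = y" using sinv_props[OF assms(1)] by metis
  qed
  have sub: "sinv \<sigma> ` {1..?k} \<subseteq> {1..?k}" using sinv_props[OF assms(1)] by auto
  show ?thesis using inj sub by (simp add: card_image card_subset_eq)
qed

lemma sorted_list_strict: "sorted_wrt (<) xs \<Longrightarrow> sorted_list_of_set (set xs) = xs"
  by (simp add: sorted_list_of_set_sort_remdups strict_sorted_iff distinct_remdups_id sorted_sort_id)

lemma key_sorted:
  assumes "isperm \<sigma>"
    and iso: "\<forall>a\<in>{1..length \<sigma>}. \<forall>b\<in>{1..length \<sigma>}. (\<pi>!(i a - 1) < \<pi>!(i b - 1)) \<longleftrightarrow> (\<sigma>!(a-1) < \<sigma>!(b-1))"
  shows "sorted_list_of_set ((\<lambda>a. \<pi>!(i a - 1)) ` {1..length \<sigma>})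
         = map (\<lambda>m. \<pi>!(i (sinv \<sigma> m) - 1)) [1..<length \<sigma>+1]"
proof -
  let ?k = "length \<sigma>"
  let ?l = "map (\<lambda>m. \<pi>!(i (sinv \<sigma> m) - 1)) [1..<?k+1]"
  have set: "set ?l = (\<lambda>a. \<pi>!(i a - 1)) ` {1..?k}"
  proof -
    have "set ?l = (\<lambda>a. \<pi>!(i a - 1)) ` (sinv \<sigma> ` {1..?k})"
      by (simp add: image_image atLeastLessThanSuc_atLeastAtMost del: upt_Suc)
    thus ?thesis using sinv_image[OF assms(1)] by simp
  qed
  have "sorted_wrt (<) ?l"
    unfolding sorted_wrt_iff_nth_less
  proof (intro allI impI)
    fix p q assume pq: "p < q" "q < length ?l"
    hence q: "q < ?k" by (simp del: upt_Suc)
    let ?a = "sinv \<sigma> (p+1)" and ?b = "sinv \<sigma> (q+1)"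
    have a: "?a \<in> {1..?k}" "\<sigma> ! (?a - 1) = p + 1" using sinv_props[OF assms(1), of "p+1"] pq q by auto
    have b: "?b \<in> {1..?k}" "\<sigma> ! (?b - 1) = q + 1" using sinv_props[OF assms(1), of "q+1"] pq q by auto
    have "\<pi>!(i ?a - 1) < \<pi>!(i ?b - 1)" using iso a b pq by auto
    thus "?l ! p < ?l ! q" using pq q by (simp add: nth_map_upt del: upt_Suc)
  qed
  thus ?thesis using sorted_list_strict set by metis
qed

lemma ext_cong: "(\<forall>m\<in>{1..k}. f m = g m) \<Longrightarrow> x \<le> k+1 \<Longrightarrow> ext_seq n k f x = ext_seq n k g x"
  by (auto simp: ext_seq_def)

definition occ :: "nat list \<Rightarrow> nat list \<Rightarrow> nat set \<Rightarrow> nat set \<Rightarrow> (nat\<Rightarrow>nat) \<Rightarrow> bool" where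
"occ \<pi> \<sigma> X Y i = (let n = length \<pi>; k = length \<sigma> in
  (\<forall>a\<in>{1..k}. 1 \<le> i a \<and> i a \<le> n) \<and> (\<forall>a\<in>{1..k}. \<forall>b\<in>{1..k}. a<b \<longrightarrow> i a < i b) \<and>
  (\<forall>a\<in>{1..k}. \<forall>b\<in>{1..k}. (\<pi>!(i a - 1) < \<pi>!(i b - 1)) \<longleftrightarrow> (\<sigma>!(a-1) < \<sigma>!(b-1))) \<and>
  (\<forall>x\<in>X. ext_seq n k i (x+1) = ext_seq n k i x + 1) \<and>
  (\<forall>y\<in>Y. ext_seq n k (\<lambda>m. \<pi>!(i (sinv \<sigma> m) - 1)) (y+1) = ext_seq n k (\<lambda>m. \<pi>!(i (sinv \<sigma> m) - 1)) y + 1))"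

lemma contains_occ:
  assumes "valid_bvpat (\<sigma>, X, Y)"
  shows "contains_bv \<pi> (\<sigma>, X, Y) \<longleftrightarrow> (\<exists>i. occ \<pi> \<sigma> X Y i)"
proof -
  let ?k = "length \<sigma>" and ?n = "length \<pi>"
  have perm: "isperm \<sigma>" and Ysub: "Y \<subseteq> {0..?k}" using assms by (auto simp: valid_bvpat_def)
  have eq: "(\<forall>y\<in>Y. ext_seq ?n ?k (\<lambda>m. sorted_list_of_set ((\<lambda>a. \<pi> ! (i a - 1)) ` {1..?k}) ! (m - 1)) (y+1)
             = ext_seq ?n ?k (\<lambda>m. sorted_list_of_set ((\<lambda>a. \<pi> ! (i a - 1)) ` {1..?k}) ! (m - 1)) y + 1)
        \<longleftrightarrow> (\<forall>y\<in>Y. ext_seq ?n ?k (\<lambda>m. \<pi>!(i (sinv \<sigma> m) - 1)) (y+1) = ext_seq ?n ?k (\<lambda>m. \<pi>!(i (sinv \<sigma> m) - 1)) y + 1)"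
    if iso: "\<forall>a\<in>{1..?k}. \<forall>b\<in>{1..?k}. (\<pi>!(i a - 1) < \<pi>!(i b - 1)) \<longleftrightarrow> (\<sigma>!(a-1) < \<sigma>!(b-1))" for i
  proof -
    have fe: "\<forall>m\<in>{1..?k}. sorted_list_of_set ((\<lambda>a. \<pi> ! (i a - 1)) ` {1..?k}) ! (m - 1) = \<pi>!(i (sinv \<sigma> m) - 1)"
      using key_sorted[OF perm iso] by (auto simp: nth_map_upt simp del: upt_Suc)
    show ?thesis
    proof (intro ball_cong refl)
      fix y assume "y \<in> Y"
      hence "y + 1 \<le> ?k + 1" "y \<le> ?k + 1" using Ysub by auto
      thus "(ext_seq ?n ?k (\<lambda>m. sorted_list_of_set ((\<lambda>a. \<pi> ! (i a - 1)) ` {1..?k}) ! (m - 1)) (y+1)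
             = ext_seq ?n ?k (\<lambda>m. sorted_list_of_set ((\<lambda>a. \<pi> ! (i a - 1)) ` {1..?k}) ! (m - 1)) y + 1) =
            (ext_seq ?n ?k (\<lambda>m. \<pi>!(i (sinv \<sigma> m) - 1)) (y+1) = ext_seq ?n ?k (\<lambda>m. \<pi>!(i (sinv \<sigma> m) - 1)) y + 1)"
        using ext_cong[OF fe] by metis
    qed
  qed
  show ?thesis
    unfolding contains_bv_def occ_def Let_def prod.case
    using eq by blast
qed


lemma ext_refl:
  assumes "\<forall>m\<in>{1..k}. g m = n+1 - f (k+1-m)" "y \<le> k+1"
  shows "ext_seq n k g y = n+1 - ext_seq n k f (k+1-y)"
  using assms by (auto simp: ext_seq_def)

lemma ext_bound:
  assumes "\<forall>m\<in>{1..k}. f m \<le> n" "y \<le> k+1"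
  shows "ext_seq n k f y \<le> n+1"
proof -
  have "y \<noteq> 0 \<Longrightarrow> y \<noteq> k+1 \<Longrightarrow> f y \<le> n" using assms by auto
  thus ?thesis unfolding ext_seq_def by auto
qed

lemma ext_refl_step:
  assumes "\<forall>m\<in>{1..k}. g m = n+1 - f (k+1-m)" "\<forall>m\<in>{1..k}. f m \<le> n" "x \<le> k"
    and "ext_seq n k f (x+1) = ext_seq n k f x + 1"
  shows "ext_seq n k g (k - x + 1) = ext_seq n k g (k - x) + 1"
proof -
  have e1: "ext_seq n k g (k - x + 1) = n+1 - ext_seq n k f x"
    using ext_refl[OF assms(1), of "k-x+1"] assms(3) by simp
  have e2: "ext_seq n k g (k - x) = n+1 - ext_seq n k f (x+1)"
    using ext_refl[OF assms(1), of "k-x"] assms(3) by (simp add: Suc_diff_le)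
  have "ext_seq n k f (x+1) \<le> n+1" using ext_bound[OF assms(2)] assms(3) by simp
  thus ?thesis using e1 e2 assms(4) by simp
qed

lemma sinv_rev: assumes "isperm \<sigma>" "m \<in> {1..length \<sigma>}"
  shows "sinv (rev \<sigma>) m = length \<sigma> + 1 - sinv \<sigma> m"
proof -
  let ?k = "length \<sigma>" and ?b = "sinv \<sigma> m"
  have b: "?b \<in> {1..?k}" "\<sigma> ! (?b - 1) = m" using sinv_props[OF assms] by auto
  have p: "isperm (rev \<sigma>)" using assms(1) by (simp add: permutations_of_set_def)
  have "rev \<sigma> ! (?k - ?b) = \<sigma> ! (?k - Suc (?k - ?b))" by (rule rev_nth) (use b in auto)
  also have "?k - Suc (?k - ?b) = ?b - 1" using b by auto
  finally have "rev \<sigma> ! (?k - ?b) = m" using b by simp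
  moreover have "?k - ?b < length (rev \<sigma>)" using b by auto
  ultimately have "sinv (rev \<sigma>) m = ?k - ?b + 1" using sinv_nth[OF p, of "?k - ?b"] by simp
  thus ?thesis using b by (simp add: Suc_diff_le)
qed

lemma occ_rev:
  assumes v: "valid_bvpat (\<sigma>, X, Y)" and pp: "isperm \<pi>" and o: "occ \<pi> \<sigma> X Y i"
  shows "occ (rev \<pi>) (rev \<sigma>) ((\<lambda>x. length \<sigma> - x) ` X) Y
              (\<lambda>a. length \<pi> + 1 - i (length \<sigma> + 1 - a))"
proof -
  let ?k = "length \<sigma>" and ?n = "length \<pi>"
  define i' where "i' = (\<lambda>a. ?n + 1 - i (?k + 1 - a))"
  have perm: "isperm \<sigma>" and Xs: "X \<subseteq> {0..?k}" and Ys: "Y \<subseteq> {0..?k}" using v by (auto simp: valid_bvpat_def)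
  have r: "\<forall>a\<in>{1..?k}. 1 \<le> i a \<and> i a \<le> ?n"
    and m: "\<forall>a\<in>{1..?k}. \<forall>b\<in>{1..?k}. a<b \<longrightarrow> i a < i b"
    and iso: "\<forall>a\<in>{1..?k}. \<forall>b\<in>{1..?k}. (\<pi>!(i a - 1) < \<pi>!(i b - 1)) \<longleftrightarrow> (\<sigma>!(a-1) < \<sigma>!(b-1))"
    and ox: "\<forall>x\<in>X. ext_seq ?n ?k i (x+1) = ext_seq ?n ?k i x + 1"
    and oy: "\<forall>y\<in>Y. ext_seq ?n ?k (\<lambda>m. \<pi>!(i (sinv \<sigma> m) - 1)) (y+1) = ext_seq ?n ?k (\<lambda>m. \<pi>!(i (sinv \<sigma> m) - 1)) y + 1"
    using o unfolding occ_def Let_def by auto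
  have refl: "a \<in> {1..?k} \<Longrightarrow> ?k + 1 - a \<in> {1..?k}" for a by auto
  have r': "\<forall>a\<in>{1..?k}. 1 \<le> i' a \<and> i' a \<le> ?n" using r refl unfolding i'_def by fastforce
  have pv: "rev \<pi> ! (i' a - 1) = \<pi> ! (i (?k+1-a) - 1)" if "a \<in> {1..?k}" for a
  proof -
    have "1 \<le> i (?k+1-a)" "i (?k+1-a) \<le> ?n" using r refl[OF that] by auto
    thus ?thesis unfolding i'_def by (simp add: rev_nth Suc_diff_Suc)
  qed
  have sv: "rev \<sigma> ! (a - 1) = \<sigma> ! ((?k+1-a) - 1)" if "a \<in> {1..?k}" for a
    using that rev_nth[of "a-1" \<sigma>] by auto
  have m': "\<forall>a\<in>{1..?k}. \<forall>b\<in>{1..?k}. a<b \<longrightarrow> i' a < i' b"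
  proof (intro ballI impI)
    fix a b assume ab: "a \<in> {1..?k}" "b \<in> {1..?k}" "a < b"
    hence "i (?k+1-b) < i (?k+1-a)" using m refl by auto
    moreover have "i (?k+1-a) \<le> ?n" using r refl ab by auto
    ultimately show "i' a < i' b" unfolding i'_def by simp
  qed
  have iso': "\<forall>a\<in>{1..?k}. \<forall>b\<in>{1..?k}. (rev \<pi>!(i' a - 1) < rev \<pi>!(i' b - 1)) \<longleftrightarrow> (rev \<sigma>!(a-1) < rev \<sigma>!(b-1))"
    using iso refl pv sv by simp
  have ox': "\<forall>x\<in>(\<lambda>x. ?k - x) ` X. ext_seq ?n ?k i' (x+1) = ext_seq ?n ?k i' x + 1"
  proof
    fix x' assume "x' \<in> (\<lambda>x. ?k - x) ` X"
    then obtain x where x: "x \<in> X" "x' = ?k - x" by auto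
    have g: "\<forall>m\<in>{1..?k}. i' m = ?n+1 - i (?k+1-m)" unfolding i'_def by simp
    have b: "\<forall>m\<in>{1..?k}. i m \<le> ?n" using r by auto
    show "ext_seq ?n ?k i' (x'+1) = ext_seq ?n ?k i' x' + 1"
      using ext_refl_step[OF g b, of x] x ox Xs by auto
  qed
  have fy: "\<forall>m\<in>{1..?k}. rev \<pi> ! (i' (sinv (rev \<sigma>) m) - 1) = \<pi>!(i (sinv \<sigma> m) - 1)"
  proof
    fix m assume mm: "m \<in> {1..?k}"
    have T: "sinv \<sigma> m \<in> {1..?k}" using sinv_props[OF perm mm] by simp
    have "sinv (rev \<sigma>) m = ?k + 1 - sinv \<sigma> m" using sinv_rev[OF perm mm] .
    moreover have "?k + 1 - (?k + 1 - sinv \<sigma> m) = sinv \<sigma> m" using T by auto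
    ultimately show "rev \<pi> ! (i' (sinv (rev \<sigma>) m) - 1) = \<pi>!(i (sinv \<sigma> m) - 1)"
      using pv[OF refl[OF T]] by simp
  qed
  have oy': "\<forall>y\<in>Y. ext_seq ?n ?k (\<lambda>m. rev \<pi>!(i' (sinv (rev \<sigma>) m) - 1)) (y+1) = ext_seq ?n ?k (\<lambda>m. rev \<pi>!(i' (sinv (rev \<sigma>) m) - 1)) y + 1"
  proof
    fix y assume "y \<in> Y"
    hence "y \<le> ?k" using Ys by auto
    thus "ext_seq ?n ?k (\<lambda>m. rev \<pi>!(i' (sinv (rev \<sigma>) m) - 1)) (y+1) = ext_seq ?n ?k (\<lambda>m. rev \<pi>!(i' (sinv (rev \<sigma>) m) - 1)) y + 1"
      using ext_cong[OF fy, of "y+1"] ext_cong[OF fy, of y] oy \<open>y \<in> Y\<close> by simp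
  qed
  show ?thesis unfolding occ_def Let_def i'_def[symmetric] using r' m' iso' ox' oy' by simp
qed


lemma diff_rev_less: "(a::nat) \<le> N \<Longrightarrow> b \<le> N \<Longrightarrow> (N+1 - a < N+1 - b) \<longleftrightarrow> (b < a)"
  by arith

lemma comp_perm: assumes "xs \<in> permutations_of_set {1..(k::nat)}"
  shows "map (\<lambda>v. k+1-v) xs \<in> permutations_of_set {1..k}"
proof -
  have s: "set xs = {1..k}" and d: "distinct xs" using assms by (auto simp: permutations_of_set_def)
  have inj: "inj_on (\<lambda>v. k+1-v) {1..k}"
  proof (rule inj_onI)
    fix x y assume "x \<in> {1..k}" "y \<in> {1..k}" "k+1-x = k+1-y"
    hence "x \<le> k" "y \<le> k" "k+1-x = k+1-y" by auto
    thus "x = y" by arith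
  qed
  have "(\<lambda>v. k+1-v) ` {1..k} = {1..k}"
  proof
    show "(\<lambda>v. k+1-v) ` {1..k} \<subseteq> {1..k}" by auto
    show "{1..k} \<subseteq> (\<lambda>v. k+1-v) ` {1..k}"
    proof
      fix x assume "x \<in> {1..k}"
      hence "x = k+1-(k+1-x)" "k+1-x \<in> {1..k}" by auto
      thus "x \<in> (\<lambda>v. k+1-v) ` {1..k}" by blast
    qed
  qed
  thus ?thesis using s d inj by (auto simp: permutations_of_set_def distinct_map)
qed

lemma perm_length: "xs \<in> permutations_of_set {1..n} \<Longrightarrow> length xs = n"
  by (metis card_atLeastAtMost diff_Suc_1 distinct_card permutations_of_setD)

lemma sinv_comp: assumes "isperm \<sigma>" "m \<in> {1..length \<sigma>}"
  shows "sinv (map (\<lambda>v. length \<sigma>+1-v) \<sigma>) m = sinv \<sigma> (length \<sigma> + 1 - m)"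
proof -
  let ?k = "length \<sigma>" and ?b = "sinv \<sigma> (length \<sigma> + 1 - m)"
  have mm: "?k + 1 - m \<in> {1..?k}" using assms(2) by auto
  have b: "?b \<in> {1..?k}" "\<sigma> ! (?b - 1) = ?k + 1 - m" using sinv_props[OF assms(1) mm] by auto
  have p: "isperm (map (\<lambda>v. length \<sigma>+1-v) \<sigma>)" using comp_perm[OF assms(1)] by simp
  have lt: "?b - 1 < ?k" using b by auto
  have "map (\<lambda>v. length \<sigma>+1-v) \<sigma> ! (?b - 1) = m" using b lt assms(2) by auto
  hence "sinv (map (\<lambda>v. length \<sigma>+1-v) \<sigma>) m = ?b - 1 + 1" using sinv_nth[OF p, of "?b - 1"] lt by simp
  thus ?thesis using b by simp
qed

lemma occ_comp:
  assumes v: "valid_bvpat (\<sigma>, X, Y)" and pp: "isperm \<pi>" and o: "occ \<pi> \<sigma> X Y i"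
  shows "occ (map (\<lambda>v. length \<pi>+1-v) \<pi>) (map (\<lambda>v. length \<sigma>+1-v) \<sigma>) X ((\<lambda>y. length \<sigma> - y) ` Y) i"
proof -
  let ?k = "length \<sigma>" and ?n = "length \<pi>"
  define \<pi>' where "\<pi>' = map (\<lambda>v. ?n+1-v) \<pi>"
  define \<sigma>' where "\<sigma>' = map (\<lambda>v. ?k+1-v) \<sigma>"
  have perm: "isperm \<sigma>" and Xs: "X \<subseteq> {0..?k}" and Ys: "Y \<subseteq> {0..?k}" using v by (auto simp: valid_bvpat_def)
  have r: "\<forall>a\<in>{1..?k}. 1 \<le> i a \<and> i a \<le> ?n"
    and m: "\<forall>a\<in>{1..?k}. \<forall>b\<in>{1..?k}. a<b \<longrightarrow> i a < i b"
    and iso: "\<forall>a\<in>{1..?k}. \<forall>b\<in>{1..?k}. (\<pi>!(i a - 1) < \<pi>!(i b - 1)) \<longleftrightarrow> (\<sigma>!(a-1) < \<sigma>!(b-1))"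
    and ox: "\<forall>x\<in>X. ext_seq ?n ?k i (x+1) = ext_seq ?n ?k i x + 1"
    and oy: "\<forall>y\<in>Y. ext_seq ?n ?k (\<lambda>m. \<pi>!(i (sinv \<sigma> m) - 1)) (y+1) = ext_seq ?n ?k (\<lambda>m. \<pi>!(i (sinv \<sigma> m) - 1)) y + 1"
    using o unfolding occ_def Let_def by auto
  have pval: "\<pi> ! (i a - 1) \<in> {1..?n}" if "a \<in> {1..?k}" for a
  proof -
    have "1 \<le> i a" "i a \<le> ?n" using r that by auto
    hence "i a - 1 < ?n" by arith
    thus ?thesis using isperm_nth[OF pp] by blast
  qed
  have sval: "\<sigma> ! (a - 1) \<in> {1..?k}" if "a \<in> {1..?k}" for a
    using isperm_nth[OF perm, of "a-1"] that by auto
  have pv: "\<pi>' ! (i a - 1) = ?n + 1 - \<pi> ! (i a - 1)" if "a \<in> {1..?k}" for a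
  proof -
    have "1 \<le> i a" "i a \<le> ?n" using r that by auto
    hence "i a - 1 < ?n" by arith
    thus ?thesis unfolding \<pi>'_def by simp
  qed
  have sv: "\<sigma>' ! (a - 1) = ?k + 1 - \<sigma> ! (a - 1)" if "a \<in> {1..?k}" for a
    using that unfolding \<sigma>'_def by auto
  have iso': "\<forall>a\<in>{1..?k}. \<forall>b\<in>{1..?k}. (\<pi>'!(i a - 1) < \<pi>'!(i b - 1)) \<longleftrightarrow> (\<sigma>'!(a-1) < \<sigma>'!(b-1))"
  proof (intro ballI)
    fix a b assume ab: "a \<in> {1..?k}" "b \<in> {1..?k}"
    have "(\<pi>'!(i a - 1) < \<pi>'!(i b - 1)) \<longleftrightarrow> \<pi>!(i b - 1) < \<pi>!(i a - 1)"
      using pv[OF ab(1)] pv[OF ab(2)] pval[OF ab(1)] pval[OF ab(2)] diff_rev_less[of "\<pi> ! (i a - 1)" ?n "\<pi> ! (i b - 1)"] by simp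
    also have "\<dots> \<longleftrightarrow> \<sigma>!(b-1) < \<sigma>!(a-1)" using iso ab by auto
    also have "\<dots> \<longleftrightarrow> (\<sigma>'!(a-1) < \<sigma>'!(b-1))"
      using sv[OF ab(1)] sv[OF ab(2)] sval[OF ab(1)] sval[OF ab(2)] diff_rev_less[of "\<sigma> ! (a - 1)" ?k "\<sigma> ! (b - 1)"] by simp
    finally show "(\<pi>'!(i a - 1) < \<pi>'!(i b - 1)) \<longleftrightarrow> (\<sigma>'!(a-1) < \<sigma>'!(b-1))" .
  qed
  have len: "length \<pi>' = ?n" "length \<sigma>' = ?k" unfolding \<pi>'_def \<sigma>'_def by auto
  define f where "f = (\<lambda>m. \<pi>!(i (sinv \<sigma> m) - 1))"
  have fb: "\<forall>m\<in>{1..?k}. f m \<le> ?n" unfolding f_def using pval sinv_props[OF perm] by fastforce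
  have g: "\<forall>m\<in>{1..?k}. \<pi>'!(i (sinv \<sigma>' m) - 1) = ?n+1 - f (?k+1-m)"
  proof
    fix m assume mm: "m \<in> {1..?k}"
    have "sinv \<sigma>' m = sinv \<sigma> (?k+1-m)" unfolding \<sigma>'_def using sinv_comp[OF perm mm] .
    moreover have mm': "?k+1-m \<in> {1..?k}" using mm by auto
    moreover have "sinv \<sigma> (?k+1-m) \<in> {1..?k}" using sinv_props[OF perm mm'] by auto
    ultimately show "\<pi>'!(i (sinv \<sigma>' m) - 1) = ?n+1 - f (?k+1-m)" unfolding f_def using pv by simp
  qed
  have oy': "\<forall>y\<in>(\<lambda>y. ?k - y) ` Y. ext_seq ?n ?k (\<lambda>m. \<pi>'!(i (sinv \<sigma>' m) - 1)) (y+1) = ext_seq ?n ?k (\<lambda>m. \<pi>'!(i (sinv \<sigma>' m) - 1)) y + 1"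
  proof
    fix y' assume "y' \<in> (\<lambda>y. ?k - y) ` Y"
    then obtain y where y: "y \<in> Y" "y' = ?k - y" by auto
    show "ext_seq ?n ?k (\<lambda>m. \<pi>'!(i (sinv \<sigma>' m) - 1)) (y'+1) = ext_seq ?n ?k (\<lambda>m. \<pi>'!(i (sinv \<sigma>' m) - 1)) y' + 1"
      using ext_refl_step[OF g fb, of y] y oy Ys unfolding f_def by auto
  qed
  show ?thesis unfolding occ_def Let_def \<pi>'_def[symmetric] \<sigma>'_def[symmetric] len
    using r m iso' ox oy' by simp
qed


lemma sinv_pinv: assumes "isperm \<sigma>" "m \<in> {1..length \<sigma>}"
  shows "sinv (perm_inv_list \<sigma>) m = \<sigma> ! (m - 1)"
proof -
  let ?k = "length \<sigma>"
  have v: "\<sigma> ! (m - 1) \<in> {1..?k}" using isperm_nth[OF assms(1), of "m-1"] assms(2) by auto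
  have "sinv \<sigma> (\<sigma> ! (m-1)) = m" using sinv_nth[OF assms(1), of "m-1"] assms(2) by auto
  moreover have lt: "\<sigma> ! (m - 1) - 1 < ?k" using v by auto
  ultimately have "perm_inv_list \<sigma> ! (\<sigma> ! (m - 1) - 1) = m"
    using perm_inv_nth[OF lt] v by simp
  hence "sinv (perm_inv_list \<sigma>) m = \<sigma> ! (m - 1) - 1 + 1"
    using sinv_nth[OF perm_inv_isperm[OF assms(1)], of "\<sigma> ! (m - 1) - 1"] lt by simp
  thus ?thesis using v by simp
qed

lemma occ_inv:
  assumes v: "valid_bvpat (\<sigma>, X, Y)" and pp: "isperm \<pi>" and o: "occ \<pi> \<sigma> X Y i"
  shows "occ (perm_inv_list \<pi>) (perm_inv_list \<sigma>) Y X (\<lambda>m. \<pi>!(i (sinv \<sigma> m) - 1))"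
proof -
  let ?k = "length \<sigma>" and ?n = "length \<pi>"
  define \<pi>' where "\<pi>' = perm_inv_list \<pi>"
  define \<sigma>' where "\<sigma>' = perm_inv_list \<sigma>"
  define f where "f = (\<lambda>m. \<pi>!(i (sinv \<sigma> m) - 1))"
  have perm: "isperm \<sigma>" and Xs: "X \<subseteq> {0..?k}" and Ys: "Y \<subseteq> {0..?k}" using v by (auto simp: valid_bvpat_def)
  have r: "\<forall>a\<in>{1..?k}. 1 \<le> i a \<and> i a \<le> ?n"
    and m: "\<forall>a\<in>{1..?k}. \<forall>b\<in>{1..?k}. a<b \<longrightarrow> i a < i b"
    and iso: "\<forall>a\<in>{1..?k}. \<forall>b\<in>{1..?k}. (\<pi>!(i a - 1) < \<pi>!(i b - 1)) \<longleftrightarrow> (\<sigma>!(a-1) < \<sigma>!(b-1))"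
    and ox: "\<forall>x\<in>X. ext_seq ?n ?k i (x+1) = ext_seq ?n ?k i x + 1"
    and oy: "\<forall>y\<in>Y. ext_seq ?n ?k f (y+1) = ext_seq ?n ?k f y + 1"
    using o unfolding occ_def Let_def f_def by auto
  have len: "length \<pi>' = ?n" "length \<sigma>' = ?k" unfolding \<pi>'_def \<sigma>'_def by auto
  have T: "sinv \<sigma> m \<in> {1..?k}" "\<sigma> ! (sinv \<sigma> m - 1) = m" if "m \<in> {1..?k}" for m
    using sinv_props[OF perm that] by auto
  have ilt: "i a - 1 < ?n" "i a - 1 + 1 = i a" if "a \<in> {1..?k}" for a
  proof -
    have "1 \<le> i a" "i a \<le> ?n" using r that by auto
    thus "i a - 1 < ?n" "i a - 1 + 1 = i a" by arith+
  qed
  have fval: "f m \<in> {1..?n}" if "m \<in> {1..?k}" for m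
    unfolding f_def using isperm_nth[OF pp] ilt(1)[OF T(1)[OF that]] by blast
  have pf: "\<pi>' ! (f m - 1) = i (sinv \<sigma> m)" if "m \<in> {1..?k}" for m
  proof -
    have "f m - 1 < ?n" using fval[OF that] by auto
    hence "\<pi>' ! (f m - 1) = sinv \<pi> (f m - 1 + 1)" unfolding \<pi>'_def by (rule perm_inv_nth)
    also have "f m - 1 + 1 = f m" using fval[OF that] by auto
    also have "sinv \<pi> (f m) = i (sinv \<sigma> m) - 1 + 1" unfolding f_def
      using sinv_nth[OF pp ilt(1)[OF T(1)[OF that]]] .
    finally show ?thesis using ilt(2)[OF T(1)[OF that]] by simp
  qed
  have sv: "\<sigma>' ! (m - 1) = sinv \<sigma> m" if "m \<in> {1..?k}" for m
    unfolding \<sigma>'_def using perm_inv_nth[of "m-1" \<sigma>] that by auto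
  have r': "\<forall>a\<in>{1..?k}. 1 \<le> f a \<and> f a \<le> ?n" using fval by auto
  have m': "\<forall>a\<in>{1..?k}. \<forall>b\<in>{1..?k}. a<b \<longrightarrow> f a < f b"
  proof (intro ballI impI)
    fix a b assume ab: "a \<in> {1..?k}" "b \<in> {1..?k}" "a < b"
    thus "f a < f b" unfolding f_def using iso T[OF ab(1)] T[OF ab(2)] by auto
  qed
  have im: "(i a < i b) \<longleftrightarrow> (a < b)" if "a \<in> {1..?k}" "b \<in> {1..?k}" for a b
    using m that by (metis less_asym linorder_neqE_nat)
  have iso': "\<forall>a\<in>{1..?k}. \<forall>b\<in>{1..?k}. (\<pi>'!(f a - 1) < \<pi>'!(f b - 1)) \<longleftrightarrow> (\<sigma>'!(a-1) < \<sigma>'!(b-1))"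
    using pf sv im T by simp
  have g: "\<forall>m\<in>{1..?k}. \<pi>'!(f (sinv \<sigma>' m) - 1) = i m"
  proof
    fix m assume mm: "m \<in> {1..?k}"
    have s: "sinv \<sigma>' m = \<sigma> ! (m - 1)" unfolding \<sigma>'_def using sinv_pinv[OF perm mm] .
    have sm: "\<sigma> ! (m - 1) \<in> {1..?k}" using isperm_nth[OF perm, of "m-1"] mm by auto
    have "sinv \<sigma> (\<sigma> ! (m-1)) = m" using sinv_nth[OF perm, of "m-1"] mm by auto
    thus "\<pi>'!(f (sinv \<sigma>' m) - 1) = i m" using pf[OF sm] s by simp
  qed
  have oy': "\<forall>x\<in>X. ext_seq ?n ?k (\<lambda>m. \<pi>'!(f (sinv \<sigma>' m) - 1)) (x+1) = ext_seq ?n ?k (\<lambda>m. \<pi>'!(f (sinv \<sigma>' m) - 1)) x + 1"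
  proof
    fix x assume "x \<in> X"
    hence "x \<le> ?k" using Xs by auto
    thus "ext_seq ?n ?k (\<lambda>m. \<pi>'!(f (sinv \<sigma>' m) - 1)) (x+1) = ext_seq ?n ?k (\<lambda>m. \<pi>'!(f (sinv \<sigma>' m) - 1)) x + 1"
      using ext_cong[OF g, of "x+1"] ext_cong[OF g, of x] ox \<open>x \<in> X\<close> by simp
  qed
  show ?thesis unfolding occ_def Let_def \<pi>'_def[symmetric] \<sigma>'_def[symmetric] f_def[symmetric] len
    using r' m' iso' oy oy' by simp
qed


lemma perm_isperm: "\<pi> \<in> permutations_of_set {1..n} \<Longrightarrow> isperm \<pi>"
  using perm_length by metis

lemma valid_rev: "valid_bvpat q \<Longrightarrow> valid_bvpat (bv_rev q) \<and> bv_rev (bv_rev q) = q"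
proof -
  obtain \<sigma> X Y where q: "q = (\<sigma>, X, Y)" by (metis prod.exhaust)
  assume "valid_bvpat q"
  hence v: "isperm \<sigma>" "X \<subseteq> {0..length \<sigma>}" "Y \<subseteq> {0..length \<sigma>}" by (auto simp: q valid_bvpat_def)
  have "isperm (rev \<sigma>)" using v(1) by (simp add: permutations_of_set_def)
  moreover have "(\<lambda>x. length \<sigma> - x) ` ((\<lambda>x. length \<sigma> - x) ` X) = X"
  proof -
    have "(\<lambda>x. length \<sigma> - x) ` ((\<lambda>x. length \<sigma> - x) ` X) = (\<lambda>x. x) ` X"
      unfolding image_image by (rule image_cong) (use v(2) in auto)
    thus ?thesis by simp
  qed
  ultimately show ?thesis using v by (auto simp: q bv_rev_def valid_bvpat_def)
qed

lemma valid_comp: "valid_bvpat q \<Longrightarrow> valid_bvpat (bv_comp q) \<and> bv_comp (bv_comp q) = q"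
proof -
  obtain \<sigma> X Y where q: "q = (\<sigma>, X, Y)" by (metis prod.exhaust)
  assume "valid_bvpat q"
  hence v: "isperm \<sigma>" "X \<subseteq> {0..length \<sigma>}" "Y \<subseteq> {0..length \<sigma>}" by (auto simp: q valid_bvpat_def)
  have "isperm (map (\<lambda>v. length \<sigma> + 1 - v) \<sigma>)" using comp_perm[OF v(1)] by simp
  moreover have "(\<lambda>x. length \<sigma> - x) ` ((\<lambda>x. length \<sigma> - x) ` Y) = Y"
  proof -
    have "(\<lambda>x. length \<sigma> - x) ` ((\<lambda>x. length \<sigma> - x) ` Y) = (\<lambda>x. x) ` Y"
      unfolding image_image by (rule image_cong) (use v(3) in auto)
    thus ?thesis by simp
  qed
  moreover have "map (\<lambda>v. length \<sigma> + 1 - v) (map (\<lambda>v. length \<sigma> + 1 - v) \<sigma>) = \<sigma>"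
  proof -
    have "\<forall>x\<in>set \<sigma>. x \<le> length \<sigma>" using v(1) by (auto simp: permutations_of_set_def)
    thus ?thesis unfolding map_map o_def by (intro map_idI) auto
  qed
  ultimately show ?thesis using v by (auto simp: q bv_comp_def valid_bvpat_def)
qed

lemma valid_inv: "valid_bvpat q \<Longrightarrow> valid_bvpat (bv_inv q) \<and> bv_inv (bv_inv q) = q"
proof -
  obtain \<sigma> X Y where q: "q = (\<sigma>, X, Y)" by (metis prod.exhaust)
  assume "valid_bvpat q"
  hence v: "isperm \<sigma>" "X \<subseteq> {0..length \<sigma>}" "Y \<subseteq> {0..length \<sigma>}" by (auto simp: q valid_bvpat_def)
  show ?thesis using v perm_inv_isperm[OF v(1)] perm_inv_inv[OF v(1)]
    by (auto simp: q bv_inv_def valid_bvpat_def)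
qed

lemma contains_rev: assumes "valid_bvpat q" "\<pi> \<in> permutations_of_set {1..n}" "contains_bv \<pi> q"
  shows "contains_bv (rev \<pi>) (bv_rev q)"
proof -
  obtain \<sigma> X Y where q: "q = (\<sigma>, X, Y)" by (metis prod.exhaust)
  obtain i where "occ \<pi> \<sigma> X Y i" using contains_occ assms q by metis
  hence "occ (rev \<pi>) (rev \<sigma>) ((\<lambda>x. length \<sigma> - x) ` X) Y (\<lambda>a. length \<pi> + 1 - i (length \<sigma> + 1 - a))"
    using occ_rev assms(1) perm_isperm[OF assms(2)] q by blast
  moreover have "valid_bvpat (rev \<sigma>, (\<lambda>x. length \<sigma> - x) ` X, Y)"
    using valid_rev[OF assms(1)] q by (simp add: bv_rev_def)
  ultimately show ?thesis using contains_occ q by (auto simp: bv_rev_def)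
qed

lemma contains_comp: assumes "valid_bvpat q" "\<pi> \<in> permutations_of_set {1..n}" "contains_bv \<pi> q"
  shows "contains_bv (map (\<lambda>v. n+1-v) \<pi>) (bv_comp q)"
proof -
  obtain \<sigma> X Y where q: "q = (\<sigma>, X, Y)" by (metis prod.exhaust)
  obtain i where "occ \<pi> \<sigma> X Y i" using contains_occ assms q by metis
  hence "occ (map (\<lambda>v. length \<pi>+1-v) \<pi>) (map (\<lambda>v. length \<sigma>+1-v) \<sigma>) X ((\<lambda>y. length \<sigma> - y) ` Y) i"
    using occ_comp assms(1) perm_isperm[OF assms(2)] q by blast
  moreover have "valid_bvpat (map (\<lambda>v. length \<sigma>+1-v) \<sigma>, X, (\<lambda>y. length \<sigma> - y) ` Y)"
    using valid_comp[OF assms(1)] q by (simp add: bv_comp_def)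
  ultimately show ?thesis using contains_occ q perm_length[OF assms(2)] by (auto simp: bv_comp_def)
qed

lemma contains_inv: assumes "valid_bvpat q" "\<pi> \<in> permutations_of_set {1..n}" "contains_bv \<pi> q"
  shows "contains_bv (perm_inv_list \<pi>) (bv_inv q)"
proof -
  obtain \<sigma> X Y where q: "q = (\<sigma>, X, Y)" by (metis prod.exhaust)
  obtain i where "occ \<pi> \<sigma> X Y i" using contains_occ assms q by metis
  hence "occ (perm_inv_list \<pi>) (perm_inv_list \<sigma>) Y X (\<lambda>m. \<pi>!(i (sinv \<sigma> m) - 1))"
    using occ_inv assms(1) perm_isperm[OF assms(2)] q by blast
  moreover have "valid_bvpat (perm_inv_list \<sigma>, Y, X)"
    using valid_inv[OF assms(1)] q by (simp add: bv_inv_def)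
  ultimately show ?thesis using contains_occ q by (auto simp: bv_inv_def)
qed

lemma sym_card:
  fixes f :: "bvpat \<Rightarrow> bvpat" and g :: "nat list \<Rightarrow> nat list"
  assumes c1: "\<And>\<pi>. \<pi> \<in> permutations_of_set {1..n} \<Longrightarrow> contains_bv \<pi> q \<Longrightarrow> contains_bv (g \<pi>) (f q)"
    and c2: "\<And>\<pi>. \<pi> \<in> permutations_of_set {1..n} \<Longrightarrow> contains_bv \<pi> (f q) \<Longrightarrow> contains_bv (g \<pi>) q"
    and gp: "\<And>\<pi>. \<pi> \<in> permutations_of_set {1..n} \<Longrightarrow> g \<pi> \<in> permutations_of_set {1..n} \<and> g (g \<pi>) = \<pi>"
  shows "avoid_count n (f q) = avoid_count n q"
proof -
  let ?A = "{\<pi> \<in> permutations_of_set {1..n}. \<not> contains_bv \<pi> q}"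
  let ?B = "{\<pi> \<in> permutations_of_set {1..n}. \<not> contains_bv \<pi> (f q)}"
  have "bij_betw g ?A ?B"
  proof (rule bij_betw_byWitness[where f'=g])
    show "\<forall>a\<in>?A. g (g a) = a" using gp by auto
    show "\<forall>a\<in>?B. g (g a) = a" using gp by auto
    show "g ` ?A \<subseteq> ?B" using gp c2 by fastforce
    show "g ` ?B \<subseteq> ?A" using gp c1 by fastforce
  qed
  thus ?thesis unfolding avoid_count_def by (simp add: bij_betw_same_card)
qed

lemma sym_class_inv:
  assumes "q \<in> sym_class p" "valid_bvpat p"
  shows "valid_bvpat q \<and> avoid_count n q = avoid_count n p"
  using assms(1)
proof induction
  case base
  then show ?case using assms(2) by simp
next
  case (inv q)
  have v: "valid_bvpat q" using inv by simp
  have "avoid_count n (bv_inv q) = avoid_count n q"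
  proof (rule sym_card[where g = perm_inv_list])
    fix \<pi> assume p: "\<pi> \<in> permutations_of_set {1..n}"
    show "contains_bv \<pi> q \<Longrightarrow> contains_bv (perm_inv_list \<pi>) (bv_inv q)"
      using contains_inv[OF v p] .
    show "contains_bv \<pi> (bv_inv q) \<Longrightarrow> contains_bv (perm_inv_list \<pi>) q"
      using contains_inv[OF _ p, of "bv_inv q"] valid_inv[OF v] by simp
    have "isperm \<pi>" "length \<pi> = n" using perm_isperm[OF p] perm_length[OF p] by auto
    thus "perm_inv_list \<pi> \<in> permutations_of_set {1..n} \<and> perm_inv_list (perm_inv_list \<pi>) = \<pi>"
      using perm_inv_isperm perm_inv_inv by fastforce
  qed
  then show ?case using inv valid_inv by simp
next
  case (rev q)
  have v: "valid_bvpat q" using rev by simp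
  have "avoid_count n (bv_rev q) = avoid_count n q"
  proof (rule sym_card[where g = rev])
    fix \<pi> assume p: "\<pi> \<in> permutations_of_set {1..n}"
    show "contains_bv \<pi> q \<Longrightarrow> contains_bv (rev \<pi>) (bv_rev q)"
      using contains_rev[OF v p] .
    show "contains_bv \<pi> (bv_rev q) \<Longrightarrow> contains_bv (rev \<pi>) q"
      using contains_rev[OF _ p, of "bv_rev q"] valid_rev[OF v] by simp
    show "rev \<pi> \<in> permutations_of_set {1..n} \<and> rev (rev \<pi>) = \<pi>"
      using p by (simp add: permutations_of_set_def)
  qed
  then show ?case using rev valid_rev by simp
next
  case (comp q)
  have v: "valid_bvpat q" using comp by simp
  have "avoid_count n (bv_comp q) = avoid_count n q"
  proof (rule sym_card[where g = "map (\<lambda>v. n+1-v)"])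
    fix \<pi> assume p: "\<pi> \<in> permutations_of_set {1..n}"
    show "contains_bv \<pi> q \<Longrightarrow> contains_bv (map (\<lambda>v. n+1-v) \<pi>) (bv_comp q)"
      using contains_comp[OF v p] .
    show "contains_bv \<pi> (bv_comp q) \<Longrightarrow> contains_bv (map (\<lambda>v. n+1-v) \<pi>) q"
      using contains_comp[OF _ p, of "bv_comp q"] valid_comp[OF v] by simp
    have "\<forall>x\<in>set \<pi>. x \<le> n" using p by (auto simp: permutations_of_set_def)
    hence "map (\<lambda>v. n+1-v) (map (\<lambda>v. n+1-v) \<pi>) = \<pi>" unfolding map_map o_def by (intro map_idI) auto
    thus "map (\<lambda>v. n+1-v) \<pi> \<in> permutations_of_set {1..n} \<and> map (\<lambda>v. n+1-v) (map (\<lambda>v. n+1-v) \<pi>) = \<pi>"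
      using comp_perm[OF p] by simp
  qed
  then show ?case using comp valid_comp by simp
qed



lemma set3: "{Suc 0..3} = {Suc 0, 2, 3::nat}" by auto
lemma ball3: "(\<forall>a\<in>{Suc 0..3::nat}. P a) = (P (Suc 0) \<and> P 2 \<and> P 3)"
  unfolding set3 by simp

lemma isperm123: "isperm [1,2,3]" by (auto simp: permutations_of_set_def)
lemma isperm132: "isperm [1,3,2]" by (auto simp: permutations_of_set_def)

lemma sinv123: "sinv [1,2,3] 1 = 1" "sinv [1,2,3] 2 = 2" "sinv [1,2,3] 3 = 3"
  using sinv_nth[OF isperm123, of 0] sinv_nth[OF isperm123, of 1] sinv_nth[OF isperm123, of 2] by auto
lemmas sinv123' = sinv123[simplified]
lemma sinv132: "sinv [1,3,2] 1 = 1" "sinv [1,3,2] 2 = 3" "sinv [1,3,2] 3 = 2"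
  using sinv_nth[OF isperm132, of 0] sinv_nth[OF isperm132, of 1] sinv_nth[OF isperm132, of 2] by auto
lemmas sinv132' = sinv132[simplified]

lemma occ3_unfold:
  assumes "length \<sigma> = 3"
  shows "occ \<pi> \<sigma> X Y i = (let n = length \<pi>; k = 3 in
  (\<forall>a\<in>{1..k}. 1 \<le> i a \<and> i a \<le> n) \<and> (\<forall>a\<in>{1..k}. \<forall>b\<in>{1..k}. a<b \<longrightarrow> i a < i b) \<and>
  (\<forall>a\<in>{1..k}. \<forall>b\<in>{1..k}. (\<pi>!(i a - 1) < \<pi>!(i b - 1)) \<longleftrightarrow> (\<sigma>!(a-1) < \<sigma>!(b-1))) \<and>
  (\<forall>x\<in>X. ext_seq n k i (x+1) = ext_seq n k i x + 1) \<and>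
  (\<forall>y\<in>Y. ext_seq n k (\<lambda>m. \<pi>!(i (sinv \<sigma> m) - 1)) (y+1) = ext_seq n k (\<lambda>m. \<pi>!(i (sinv \<sigma> m) - 1)) y + 1))"
  using assms unfolding occ_def by simp

lemma perm_facts: assumes "\<pi> \<in> permutations_of_set {1..n}"
  shows "length \<pi> = n" "\<And>x. x < n \<Longrightarrow> 1 \<le> \<pi>!x \<and> \<pi>!x \<le> n"
    "\<And>x y. x < n \<Longrightarrow> y < n \<Longrightarrow> \<pi>!x = \<pi>!y \<longleftrightarrow> x = y"
proof -
  show l: "length \<pi> = n" using perm_length[OF assms] .
  have s: "set \<pi> = {1..n}" "distinct \<pi>" using assms by (auto simp: permutations_of_set_def)
  show "\<And>x. x < n \<Longrightarrow> 1 \<le> \<pi>!x \<and> \<pi>!x \<le> n" using s l nth_mem by fastforce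
  show "\<And>x y. x < n \<Longrightarrow> y < n \<Longrightarrow> \<pi>!x = \<pi>!y \<longleftrightarrow> x = y" using s l nth_eq_iff_index_eq by metis
qed

lemma char1: assumes p: "\<pi> \<in> permutations_of_set {1..n}"
  shows "contains_bv \<pi> ([1,2,3],{0},{0}) \<longleftrightarrow> (\<pi>!0 = 1 \<and> (\<exists>a b. 1 \<le> a \<and> a < b \<and> b < n \<and> \<pi>!a < \<pi>!b))"
proof -
  have v: "valid_bvpat ([1,2,3],{0},{0})" using isperm123 by (simp add: valid_bvpat_def)
  note pf = perm_facts[OF p]
  show ?thesis
  proof
    assume "contains_bv \<pi> ([1,2,3],{0},{0})"
    then obtain i where "occ \<pi> [1,2,3] {0} {0} i" using contains_occ[OF v] by blast
    hence o: "1 \<le> i 1" "i 1 < i 2" "i 2 < i 3" "i 3 \<le> n" "\<pi>!(i 2 - 1) < \<pi>!(i 3 - 1)" "i 1 = 1" "\<pi>!(i 1 - 1) = 1"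
      using pf(1) by (auto simp: occ3_unfold ball3 ext_seq_def sinv123' Let_def)
    show "\<pi>!0 = 1 \<and> (\<exists>a b. 1 \<le> a \<and> a < b \<and> b < n \<and> \<pi>!a < \<pi>!b)"
      using o by (intro conjI exI[of _ "i 2 - 1"] exI[of _ "i 3 - 1"]) auto
  next
    assume "\<pi>!0 = 1 \<and> (\<exists>a b. 1 \<le> a \<and> a < b \<and> b < n \<and> \<pi>!a < \<pi>!b)"
    then obtain a b where ab: "\<pi>!0 = 1" "1 \<le> a" "a < b" "b < n" "\<pi>!a < \<pi>!b" by blast
    have ga: "1 < \<pi>!a" "1 < \<pi>!b" using pf(2)[of a] pf(2)[of b] pf(3)[of a 0] pf(3)[of b 0] ab by auto
    define i where "i = (\<lambda>m::nat. if m = 1 then 1 else if m = 2 then a+1 else b+1)"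
    have "occ \<pi> [1,2,3] {0} {0} i"
      using ab ga pf(1) by (auto simp: occ3_unfold ball3 ext_seq_def sinv123' Let_def i_def)
    thus "contains_bv \<pi> ([1,2,3],{0},{0})" using contains_occ[OF v] by blast
  qed
qed

lemma char2: assumes p: "\<pi> \<in> permutations_of_set {1..n}"
  shows "contains_bv \<pi> ([1,2,3],{0},{0,2}) \<longleftrightarrow> (\<pi>!0 = 1 \<and> (\<exists>a b. 1 \<le> a \<and> a < b \<and> b < n \<and> \<pi>!b = \<pi>!a + 1))"
proof -
  have v: "valid_bvpat ([1,2,3],{0},{0,2})" using isperm123 by (simp add: valid_bvpat_def)
  note pf = perm_facts[OF p]
  show ?thesis
  proof
    assume "contains_bv \<pi> ([1,2,3],{0},{0,2})"
    then obtain i where "occ \<pi> [1,2,3] {0} {0,2} i" using contains_occ[OF v] by blast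
    hence o: "1 \<le> i 1" "i 1 < i 2" "i 2 < i 3" "i 3 \<le> n" "\<pi>!(i 3 - 1) = \<pi>!(i 2 - 1) + 1" "i 1 = 1" "\<pi>!(i 1 - 1) = 1"
      using pf(1) by (auto simp: occ3_unfold ball3 ext_seq_def sinv123' Let_def)
    show "\<pi>!0 = 1 \<and> (\<exists>a b. 1 \<le> a \<and> a < b \<and> b < n \<and> \<pi>!b = \<pi>!a + 1)"
      using o by (intro conjI exI[of _ "i 2 - 1"] exI[of _ "i 3 - 1"]) auto
  next
    assume "\<pi>!0 = 1 \<and> (\<exists>a b. 1 \<le> a \<and> a < b \<and> b < n \<and> \<pi>!b = \<pi>!a + 1)"
    then obtain a b where ab: "\<pi>!0 = 1" "1 \<le> a" "a < b" "b < n" "\<pi>!b = \<pi>!a + 1" by blast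
    have ga: "1 < \<pi>!a" "1 < \<pi>!b" using pf(2)[of a] pf(2)[of b] pf(3)[of a 0] pf(3)[of b 0] ab by auto
    define i where "i = (\<lambda>m::nat. if m = 1 then 1 else if m = 2 then a+1 else b+1)"
    have "occ \<pi> [1,2,3] {0} {0,2} i"
      using ab ga pf(1) by (auto simp: occ3_unfold ball3 ext_seq_def sinv123' Let_def i_def)
    thus "contains_bv \<pi> ([1,2,3],{0},{0,2})" using contains_occ[OF v] by blast
  qed
qed

lemma char3: assumes p: "\<pi> \<in> permutations_of_set {1..n}"
  shows "contains_bv \<pi> ([1,3,2],{0},{0}) \<longleftrightarrow> (\<pi>!0 = 1 \<and> (\<exists>a b. 1 \<le> a \<and> a < b \<and> b < n \<and> \<pi>!b < \<pi>!a))"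
proof -
  have v: "valid_bvpat ([1,3,2],{0},{0})" using isperm132 by (simp add: valid_bvpat_def)
  note pf = perm_facts[OF p]
  show ?thesis
  proof
    assume "contains_bv \<pi> ([1,3,2],{0},{0})"
    then obtain i where "occ \<pi> [1,3,2] {0} {0} i" using contains_occ[OF v] by blast
    hence o: "1 \<le> i 1" "i 1 < i 2" "i 2 < i 3" "i 3 \<le> n" "\<pi>!(i 3 - 1) < \<pi>!(i 2 - 1)" "i 1 = 1" "\<pi>!(i 1 - 1) = 1"
      using pf(1) by (auto simp: occ3_unfold ball3 ext_seq_def sinv132' Let_def)
    show "\<pi>!0 = 1 \<and> (\<exists>a b. 1 \<le> a \<and> a < b \<and> b < n \<and> \<pi>!b < \<pi>!a)"
      using o by (intro conjI exI[of _ "i 2 - 1"] exI[of _ "i 3 - 1"]) auto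
  next
    assume "\<pi>!0 = 1 \<and> (\<exists>a b. 1 \<le> a \<and> a < b \<and> b < n \<and> \<pi>!b < \<pi>!a)"
    then obtain a b where ab: "\<pi>!0 = 1" "1 \<le> a" "a < b" "b < n" "\<pi>!b < \<pi>!a" by blast
    have ga: "1 < \<pi>!a" "1 < \<pi>!b" using pf(2)[of a] pf(2)[of b] pf(3)[of a 0] pf(3)[of b 0] ab by auto
    define i where "i = (\<lambda>m::nat. if m = 1 then 1 else if m = 2 then a+1 else b+1)"
    have "occ \<pi> [1,3,2] {0} {0} i"
      using ab ga pf(1) by (auto simp: occ3_unfold ball3 ext_seq_def sinv132' Let_def i_def)
    thus "contains_bv \<pi> ([1,3,2],{0},{0})" using contains_occ[OF v] by blast
  qed
qed

lemma char4: assumes p: "\<pi> \<in> permutations_of_set {1..n}"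
  shows "contains_bv \<pi> ([1,3,2],{0},{0,2}) \<longleftrightarrow> (\<pi>!0 = 1 \<and> (\<exists>a b. 1 \<le> a \<and> a < b \<and> b < n \<and> \<pi>!a = \<pi>!b + 1))"
proof -
  have v: "valid_bvpat ([1,3,2],{0},{0,2})" using isperm132 by (simp add: valid_bvpat_def)
  note pf = perm_facts[OF p]
  show ?thesis
  proof
    assume "contains_bv \<pi> ([1,3,2],{0},{0,2})"
    then obtain i where "occ \<pi> [1,3,2] {0} {0,2} i" using contains_occ[OF v] by blast
    hence o: "1 \<le> i 1" "i 1 < i 2" "i 2 < i 3" "i 3 \<le> n" "\<pi>!(i 2 - 1) = \<pi>!(i 3 - 1) + 1" "i 1 = 1" "\<pi>!(i 1 - 1) = 1"
      using pf(1) by (auto simp: occ3_unfold ball3 ext_seq_def sinv132' Let_def)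
    show "\<pi>!0 = 1 \<and> (\<exists>a b. 1 \<le> a \<and> a < b \<and> b < n \<and> \<pi>!a = \<pi>!b + 1)"
      using o by (intro conjI exI[of _ "i 2 - 1"] exI[of _ "i 3 - 1"]) auto
  next
    assume "\<pi>!0 = 1 \<and> (\<exists>a b. 1 \<le> a \<and> a < b \<and> b < n \<and> \<pi>!a = \<pi>!b + 1)"
    then obtain a b where ab: "\<pi>!0 = 1" "1 \<le> a" "a < b" "b < n" "\<pi>!a = \<pi>!b + 1" by blast
    have ga: "1 < \<pi>!a" "1 < \<pi>!b" using pf(2)[of a] pf(2)[of b] pf(3)[of a 0] pf(3)[of b 0] ab by auto
    define i where "i = (\<lambda>m::nat. if m = 1 then 1 else if m = 2 then a+1 else b+1)"
    have "occ \<pi> [1,3,2] {0} {0,2} i"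
      using ab ga pf(1) by (auto simp: occ3_unfold ball3 ext_seq_def sinv132' Let_def i_def)
    thus "contains_bv \<pi> ([1,3,2],{0},{0,2})" using contains_occ[OF v] by blast
  qed
qed





lemma count_lemma:
  assumes n: "n \<ge> 1" and w: "w \<in> permutations_of_set {1..n}" "w ! 0 = 1"
    and ch: "\<And>\<pi>. \<pi> \<in> permutations_of_set {1..n} \<Longrightarrow> contains_bv \<pi> p \<longleftrightarrow> (\<pi>!0 = 1 \<and> \<pi> \<noteq> w)"
  shows "avoid_count n p = fact n - fact (n - 1) + 1"
proof -
  let ?P = "permutations_of_set {1..n::nat}"
  let ?H = "{\<pi> \<in> ?P. \<pi>!0 = 1}"
  have Heq: "?H = (\<lambda>xs. 1 # xs) ` permutations_of_set ({1..n} - {1})"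
  proof
    show "?H \<subseteq> (\<lambda>xs. 1 # xs) ` permutations_of_set ({1..n} - {1})"
    proof
      fix \<pi> assume h: "\<pi> \<in> ?H"
      hence l: "length \<pi> = n" using perm_length by blast
      then obtain t where t: "\<pi> = 1 # t" using h n by (cases \<pi>) auto
      have "set t = {1..n} - {1}" "distinct t" using h t by (auto simp: permutations_of_set_def)
      thus "\<pi> \<in> (\<lambda>xs. 1 # xs) ` permutations_of_set ({1..n} - {1})" using t by auto
    qed
    show "(\<lambda>xs. 1 # xs) ` permutations_of_set ({1..n} - {1}) \<subseteq> ?H"
    proof
      fix \<pi> assume "\<pi> \<in> (\<lambda>xs. 1 # xs) ` permutations_of_set ({1..n} - {1})"
      then obtain t where t: "\<pi> = 1 # t" "set t = {1..n} - {1}" "distinct t"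
        by (auto simp: permutations_of_set_def)
      have "1 \<in> {1..n}" using n by simp
      hence "set \<pi> = {1..n}" using t by (simp add: insert_absorb)
      moreover have "distinct \<pi>" using t by simp
      ultimately show "\<pi> \<in> ?H" using t by (simp add: permutations_of_set_def)
    qed
  qed
  have cH: "card ?H = fact (n - 1)"
    unfolding Heq using n by (simp add: card_image card_Diff_singleton)
  have A: "{\<pi> \<in> ?P. \<not> contains_bv \<pi> p} = (?P - ?H) \<union> {w}"
  proof (intro equalityI subsetI)
    fix \<pi> assume "\<pi> \<in> {\<pi> \<in> ?P. \<not> contains_bv \<pi> p}"
    hence "\<pi> \<in> ?P" "\<not> (\<pi>!0 = 1 \<and> \<pi> \<noteq> w)" using ch by blast+
    thus "\<pi> \<in> (?P - ?H) \<union> {w}" by blast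
  next
    fix \<pi> assume a: "\<pi> \<in> (?P - ?H) \<union> {w}"
    hence "\<pi> \<in> ?P" using w by blast
    moreover have "\<not> (\<pi>!0 = 1 \<and> \<pi> \<noteq> w)" using a by blast
    ultimately show "\<pi> \<in> {\<pi> \<in> ?P. \<not> contains_bv \<pi> p}" using ch by blast
  qed
  have fin: "finite ?P" by simp
  have "w \<notin> ?P - ?H" using w by blast
  hence "card ((?P - ?H) \<union> {w}) = card (?P - ?H) + 1"
    using fin by simp
  also have "card (?P - ?H) = fact n - fact (n - 1)"
    using cH fin by (simp add: card_Diff_subset)
  finally show ?thesis unfolding avoid_count_def A .
qed

lemma head1: assumes p: "\<pi> \<in> permutations_of_set {1..n}" and h: "\<pi>!0 = 1" and n: "n \<ge> 1"
  shows "\<pi> = 1 # tl \<pi>" "set (tl \<pi>) = {2..<n+1}" "distinct (tl \<pi>)" "length (tl \<pi>) = n - 1"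
proof -
  have l: "length \<pi> = n" using perm_length[OF p] .
  then obtain t where t: "\<pi> = 1 # t" using h n by (cases \<pi>) auto
  have "set t = {1..n} - {1}" "distinct t" using p t by (auto simp: permutations_of_set_def)
  moreover have "{1..n} - {1} = {2..<n+1::nat}" by auto
  ultimately show "\<pi> = 1 # tl \<pi>" "set (tl \<pi>) = {2..<n+1}" "distinct (tl \<pi>)" "length (tl \<pi>) = n - 1"
    using t l by auto
qed



lemma shift_ex: assumes "\<pi> = x # t" "length \<pi> = n"
  shows "(\<exists>a b. 1 \<le> a \<and> a < b \<and> b < n \<and> R (\<pi>!a) (\<pi>!b)) \<longleftrightarrow> (\<exists>a b. a < b \<and> b < length t \<and> R (t!a) (t!b))"
proof
  assume "\<exists>a b. 1 \<le> a \<and> a < b \<and> b < n \<and> R (\<pi>!a) (\<pi>!b)"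
  then obtain a b where ab: "1 \<le> a" "a < b" "b < n" "R (\<pi>!a) (\<pi>!b)" by blast
  obtain a' where a': "a = Suc a'" using ab(1) by (cases a) auto
  obtain b' where b': "b = Suc b'" using ab(1,2) by (cases b) auto
  have "a' < b'" "b' < length t" using ab(2,3) a' b' assms by auto
  moreover have "R (t!a') (t!b')" using ab(4) a' b' assms(1) by simp
  ultimately show "\<exists>a b. a < b \<and> b < length t \<and> R (t!a) (t!b)" by blast
next
  assume "\<exists>a b. a < b \<and> b < length t \<and> R (t!a) (t!b)"
  then obtain a b where ab: "a < b" "b < length t" "R (t!a) (t!b)" by blast
  have "1 \<le> Suc a \<and> Suc a < Suc b \<and> Suc b < n \<and> R (\<pi>!Suc a) (\<pi>!Suc b)" using assms ab by simp
  thus "\<exists>a b. 1 \<le> a \<and> a < b \<and> b < n \<and> R (\<pi>!a) (\<pi>!b)" by blast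
qed

lemma not_sorted_gt: assumes "distinct (t::nat list)"
  shows "(\<exists>a b. a < b \<and> b < length t \<and> t!a < t!b) \<longleftrightarrow> \<not> sorted_wrt (>) t"
  unfolding sorted_wrt_iff_nth_less
proof
  assume "\<exists>a b. a < b \<and> b < length t \<and> t!a < t!b"
  then obtain a b where "a < b" "b < length t" "t!a < t!b" by blast
  thus "\<not> (\<forall>i j. i < j \<longrightarrow> j < length t \<longrightarrow> t!j < t!i)" by (meson less_asym)
next
  assume "\<not> (\<forall>i j. i < j \<longrightarrow> j < length t \<longrightarrow> t!j < t!i)"
  then obtain a b where ab: "a < b" "b < length t" "\<not> t!b < t!a" by blast
  have "t!a \<noteq> t!b" using ab assms nth_eq_iff_index_eq by (metis less_irrefl order.strict_trans)
  hence "t!a < t!b" using ab(3) by simp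
  thus "\<exists>a b. a < b \<and> b < length t \<and> t!a < t!b" using ab by blast
qed

lemma not_sorted_lt: assumes "distinct (t::nat list)"
  shows "(\<exists>a b. a < b \<and> b < length t \<and> t!b < t!a) \<longleftrightarrow> \<not> sorted_wrt (<) t"
  unfolding sorted_wrt_iff_nth_less
proof
  assume "\<exists>a b. a < b \<and> b < length t \<and> t!b < t!a"
  then obtain a b where "a < b" "b < length t" "t!b < t!a" by blast
  thus "\<not> (\<forall>i j. i < j \<longrightarrow> j < length t \<longrightarrow> t!i < t!j)" by (meson less_asym)
next
  assume "\<not> (\<forall>i j. i < j \<longrightarrow> j < length t \<longrightarrow> t!i < t!j)"
  then obtain a b where ab: "a < b" "b < length t" "\<not> t!a < t!b" by blast
  have "t!a \<noteq> t!b" using ab assms nth_eq_iff_index_eq by (metis less_irrefl order.strict_trans)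
  hence "t!b < t!a" using ab(3) by simp
  thus "\<exists>a b. a < b \<and> b < length t \<and> t!b < t!a" using ab by blast
qed

lemma interval_sorted_lt: assumes "set t = {m..<M::nat}" "distinct t"
  shows "sorted_wrt (<) t \<longleftrightarrow> t = [m..<M]"
proof
  assume "sorted_wrt (<) t"
  hence "sorted_list_of_set (set t) = t" by (rule sorted_list_strict)
  thus "t = [m..<M]" using assms by simp
qed simp

lemma interval_sorted_gt: assumes "set t = {m..<M::nat}" "distinct t"
  shows "sorted_wrt (>) t \<longleftrightarrow> t = rev [m..<M]"
proof -
  have "sorted_wrt (>) t \<longleftrightarrow> sorted_wrt (<) (rev t)" by (simp add: sorted_wrt_rev)
  also have "\<dots> \<longleftrightarrow> rev t = [m..<M]" using interval_sorted_lt[of "rev t" m M] assms by simp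
  also have "\<dots> \<longleftrightarrow> t = rev [m..<M]" by (metis rev_rev_ident)
  finally show ?thesis .
qed




lemma adj_up:
  assumes conv: "\<forall>x\<in>set t. \<forall>y\<in>set t. \<forall>v. x \<le> v \<and> v \<le> y \<longrightarrow> v \<in> set (t::nat list)"
  shows "a < b \<Longrightarrow> b < length t \<Longrightarrow> t!a < t!b \<Longrightarrow> \<exists>a b. a < b \<and> b < length t \<and> t!b = t!a + 1"
proof (induction "t!b - t!a" arbitrary: a b rule: less_induct)
  case less
  show ?case
  proof (cases "t!b = t!a + 1")
    case True thus ?thesis using less.prems by blast
  next
    case False
    hence lt: "t!a + 1 < t!b" using less.prems by auto
    have "t!a \<in> set t" "t!b \<in> set t" using less.prems by auto
    hence "t!a + 1 \<in> set t" using conv lt by (meson le_add1 less_imp_le_nat order.trans)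
    then obtain c where c: "c < length t" "t!c = t!a + 1" by (auto simp: in_set_conv_nth)
    show ?thesis
    proof (cases "a < c")
      case True thus ?thesis using c by blast
    next
      case False
      moreover have "c \<noteq> a" using c by auto
      ultimately have "c < a" by simp
      hence "c < b" "t!c < t!b" "t!b - t!c < t!b - t!a" using less c lt by auto
      thus ?thesis using less(1)[of b c] less c by auto
    qed
  qed
qed


lemma adj_down:
  assumes conv: "\<forall>x\<in>set t. \<forall>y\<in>set t. \<forall>v. x \<le> v \<and> v \<le> y \<longrightarrow> v \<in> set (t::nat list)"
  shows "a < b \<Longrightarrow> b < length t \<Longrightarrow> t!b < t!a \<Longrightarrow> \<exists>a b. a < b \<and> b < length t \<and> t!a = t!b + 1"
proof (induction "t!a - t!b" arbitrary: a b rule: less_induct)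
  case less
  show ?case
  proof (cases "t!a = t!b + 1")
    case True thus ?thesis using less.prems by blast
  next
    case False
    hence lt: "t!b + 1 < t!a" using less.prems by auto
    have "t!a \<in> set t" "t!b \<in> set t" using less.prems by auto
    hence "t!b + 1 \<in> set t" using conv[rule_format, of "t!b" "t!a" "t!b+1"] lt by simp
    then obtain c where c: "c < length t" "t!c = t!b + 1" by (auto simp: in_set_conv_nth)
    show ?thesis
    proof (cases "c < b")
      case True thus ?thesis using c less.prems by blast
    next
      case False
      moreover have "c \<noteq> b" using c(2) by auto
      ultimately have bc: "b < c" by simp
      have ac: "a < c" using bc less.prems(1) by simp
      have tc: "t!c < t!a" using c(2) lt by simp
      have d: "t!a - t!c < t!a - t!b" using c(2) lt by simp
      show ?thesis using less.hyps[OF d ac c(1) tc] .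
    qed
  qed
qed


lemma conv_interval: "set t = {m..<M::nat} \<Longrightarrow> \<forall>x\<in>set t. \<forall>y\<in>set t. \<forall>v. x \<le> v \<and> v \<le> y \<longrightarrow> v \<in> set t"
  by auto







lemma w_dec: assumes "n \<ge> 1" shows "(1::nat) # rev [2..<n+1] \<in> permutations_of_set {1..n}"
proof -
  have "set (1 # rev [2..<n+1]) = {1..n}" using assms by auto
  thus ?thesis by (simp add: permutations_of_set_def)
qed

lemma w_inc: assumes "n \<ge> 1" shows "(1::nat) # [2..<n+1] \<in> permutations_of_set {1..n}"
proof -
  have "set (1 # [2..<n+1]) = {1..n}" using assms by auto
  thus ?thesis by (simp add: permutations_of_set_def)
qed

lemma base_gen:
  assumes p: "\<pi> \<in> permutations_of_set {1..n}" and n: "n \<ge> 1"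
    and ch: "contains_bv \<pi> q \<longleftrightarrow> (\<pi>!0 = 1 \<and> (\<exists>a b. 1 \<le> a \<and> a < b \<and> b < n \<and> R (\<pi>!a) (\<pi>!b)))"
    and tl: "\<And>t. set t = {2..<n+1} \<Longrightarrow> distinct t \<Longrightarrow> (\<exists>a b. a < b \<and> b < length t \<and> R (t!a) (t!b)) \<longleftrightarrow> t \<noteq> w"
  shows "contains_bv \<pi> q \<longleftrightarrow> (\<pi>!0 = 1 \<and> \<pi> \<noteq> 1 # w)"
proof (cases "\<pi>!0 = 1")
  case False thus ?thesis using ch by simp
next
  case True
  note h = head1[OF p True n]
  have l: "length \<pi> = n" using perm_length[OF p] .
  have "(\<exists>a b. 1 \<le> a \<and> a < b \<and> b < n \<and> R (\<pi>!a) (\<pi>!b)) \<longleftrightarrow> (\<exists>a b. a < b \<and> b < length (tl \<pi>) \<and> R (tl \<pi>!a) (tl \<pi>!b))"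
    using shift_ex[OF h(1) l] .
  also have "\<dots> \<longleftrightarrow> tl \<pi> \<noteq> w" using tl[OF h(2) h(3)] .
  also have "\<dots> \<longleftrightarrow> \<pi> \<noteq> 1 # w" using h(1) by (metis list.sel(3))
  finally show ?thesis using ch True by simp
qed

lemma tl1: "set t = {2..<n+1} \<Longrightarrow> distinct t \<Longrightarrow> (\<exists>a b. a < b \<and> b < length t \<and> t!a < t!b) \<longleftrightarrow> t \<noteq> rev [2..<n+1]"
  using not_sorted_gt interval_sorted_gt by blast

lemma tl3: "set t = {2..<n+1} \<Longrightarrow> distinct t \<Longrightarrow> (\<exists>a b. a < b \<and> b < length t \<and> t!b < t!a) \<longleftrightarrow> t \<noteq> [2..<n+1]"
  using not_sorted_lt interval_sorted_lt by blast

lemma tl2: assumes "set t = {2..<n+1}" "distinct t"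
  shows "(\<exists>a b. a < b \<and> b < length t \<and> t!b = t!a + 1) \<longleftrightarrow> t \<noteq> rev [2..<n+1]"
proof -
  have "(\<exists>a b. a < b \<and> b < length t \<and> t!b = t!a + 1) \<longleftrightarrow> (\<exists>a b. a < b \<and> b < length t \<and> t!a < t!b)"
  proof
    assume "\<exists>a b. a < b \<and> b < length t \<and> t!b = t!a + 1"
    thus "\<exists>a b. a < b \<and> b < length t \<and> t!a < t!b" by fastforce
  next
    assume "\<exists>a b. a < b \<and> b < length t \<and> t!a < t!b"
    then obtain a b where "a < b" "b < length t" "t!a < t!b" by blast
    thus "\<exists>a b. a < b \<and> b < length t \<and> t!b = t!a + 1"
      using adj_up[OF conv_interval[OF assms(1)]] by blast
  qed
  thus ?thesis using tl1 assms by simp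
qed

lemma tl4: assumes "set t = {2..<n+1}" "distinct t"
  shows "(\<exists>a b. a < b \<and> b < length t \<and> t!a = t!b + 1) \<longleftrightarrow> t \<noteq> [2..<n+1]"
proof -
  have "(\<exists>a b. a < b \<and> b < length t \<and> t!a = t!b + 1) \<longleftrightarrow> (\<exists>a b. a < b \<and> b < length t \<and> t!b < t!a)"
  proof
    assume "\<exists>a b. a < b \<and> b < length t \<and> t!a = t!b + 1"
    thus "\<exists>a b. a < b \<and> b < length t \<and> t!b < t!a" by fastforce
  next
    assume "\<exists>a b. a < b \<and> b < length t \<and> t!b < t!a"
    then obtain a b where "a < b" "b < length t" "t!b < t!a" by blast
    thus "\<exists>a b. a < b \<and> b < length t \<and> t!a = t!b + 1"
      using adj_down[OF conv_interval[OF assms(1)]] by blast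
  qed
  thus ?thesis using tl3 assms by simp
qed

lemma count1: assumes "n \<ge> 1" shows "avoid_count n ([1,2,3],{0},{0}) = fact n - fact (n - 1) + 1"
proof (rule count_lemma[OF assms w_dec[OF assms]])
  show "((1::nat) # rev [2..<n+1]) ! 0 = 1" by simp
  fix \<pi> :: "nat list" assume p: "\<pi> \<in> permutations_of_set {1..n}"
  show "contains_bv \<pi> ([1,2,3],{0},{0}) \<longleftrightarrow> (\<pi>!0 = 1 \<and> \<pi> \<noteq> 1 # rev [2..<n+1])"
    using base_gen[OF p assms char1[OF p] tl1] .
qed
lemma count2: assumes "n \<ge> 1" shows "avoid_count n ([1,2,3],{0},{0,2}) = fact n - fact (n - 1) + 1"
proof (rule count_lemma[OF assms w_dec[OF assms]])
  show "((1::nat) # rev [2..<n+1]) ! 0 = 1" by simp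
  fix \<pi> :: "nat list" assume p: "\<pi> \<in> permutations_of_set {1..n}"
  show "contains_bv \<pi> ([1,2,3],{0},{0,2}) \<longleftrightarrow> (\<pi>!0 = 1 \<and> \<pi> \<noteq> 1 # rev [2..<n+1])"
    using base_gen[OF p assms char2[OF p] tl2] .
qed
lemma count3: assumes "n \<ge> 1" shows "avoid_count n ([1,3,2],{0},{0}) = fact n - fact (n - 1) + 1"
proof (rule count_lemma[OF assms w_inc[OF assms]])
  show "((1::nat) # [2..<n+1]) ! 0 = 1" by simp
  fix \<pi> :: "nat list" assume p: "\<pi> \<in> permutations_of_set {1..n}"
  show "contains_bv \<pi> ([1,3,2],{0},{0}) \<longleftrightarrow> (\<pi>!0 = 1 \<and> \<pi> \<noteq> 1 # [2..<n+1])"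
    using base_gen[OF p assms char3[OF p] tl3] .
qed
lemma count4: assumes "n \<ge> 1" shows "avoid_count n ([1,3,2],{0},{0,2}) = fact n - fact (n - 1) + 1"
proof (rule count_lemma[OF assms w_inc[OF assms]])
  show "((1::nat) # [2..<n+1]) ! 0 = 1" by simp
  fix \<pi> :: "nat list" assume p: "\<pi> \<in> permutations_of_set {1..n}"
  show "contains_bv \<pi> ([1,3,2],{0},{0,2}) \<longleftrightarrow> (\<pi>!0 = 1 \<and> \<pi> \<noteq> 1 # [2..<n+1])"
    using base_gen[OF p assms char4[OF p] tl4] .
qed

theorem mainTheorem14:
  fixes p :: bvpat and n :: nat
  assumes "p \<in> sym_class ([1,2,3], {0}, {0}) \<union> sym_class ([1,2,3], {0}, {0,2})
             \<union> sym_class ([1,3,2], {0}, {0}) \<union> sym_class ([1,3,2], {0}, {0,2})"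
    and "n \<ge> 1"
  shows "avoid_count n p = fact n - fact (n - 1) + 1"
proof -
  have v1: "valid_bvpat ([1,2,3], {0}, {0})" "valid_bvpat ([1,2,3], {0}, {0,2})"
    using isperm123 by (auto simp: valid_bvpat_def)
  have v2: "valid_bvpat ([1,3,2], {0}, {0})" "valid_bvpat ([1,3,2], {0}, {0,2})"
    using isperm132 by (auto simp: valid_bvpat_def)
  show ?thesis
    using assms(1) sym_class_inv[OF _ v1(1), of p n] sym_class_inv[OF _ v1(2), of p n]
      sym_class_inv[OF _ v2(1), of p n] sym_class_inv[OF _ v2(2), of p n]
      count1[OF assms(2)] count2[OF assms(2)] count3[OF assms(2)] count4[OF assms(2)]
    by auto
qed


end
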